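(* Let $m\ge3$ and let $\Omega\subset\mathbb{S}^m_+$ be an open domain with $\partial\Omega=\mathcal{V}_1\cup\mathcal{V}_2$, $\mathcal{V}_1\cap\mathcal{V}_2=\emptyset$, where $\mathcal{V}_1$ is a compact (not necessarily connected) hypersurface of $\mathbb{S}^m$ containing $\partial\mathbb{S}^m_+$ and $\mathcal{V}_2$ is a finite union of disjoint compact submanifolds of $\mathbb{S}^m$ (possibly points). Let $\rho\in C^{2,\alpha}(\Omega\cup\mathcal{V}_1)$, $g=e^{2\rho}g_0$, with $h(g)=c$ on $\partial\mathbb{S}^m_+$ for a constant $c\in\mathbb{R}$, and assume $\lim_{x\to q}\big(e^{2\rho(x)}+|\nabla\rho(x)|^2\big)=+\infty$ for all $q\in\mathcal{V}_2$. Set $\mathcal{V}_1'=\mathcal{V}_1\setminus\partial\mathbb{S}^m_+$. Then there exists $t_0\ge0$ such that for every $t>t_0$, $\phi_t(\Omega\cup\mathcal{V}_1')$ is contained in the half-space $\{y\in\mathbb{H}^{m+1}:\langle\!\langle y,(0,e_{m+1})\rangle\!\rangle\ge -e^{-t}c\}$, i.e. the side of the equidistant hypersurface $E(-e^{-t}c)$ whose ideal boundary contains the north pole ${\bf n}$.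
   Context: $\mathbb{S}^m\subset\mathbb{R}^{m+1}$ is the unit sphere with round metric $g_0$; $\nabla,|\cdot|$ w.r.t. $g_0$; ${\bf n}=e_{m+1}$ is the north pole, $\mathbb{S}^m_+=\{x\in\mathbb{S}^m:x_{m+1}>0\}$, $\partial\mathbb{S}^m_+=\{x_{m+1}=0\}$. $\mathbb{L}^{m+2}$ is $\mathbb{R}^{m+2}$ with $\langle\!\langle x,y\rangle\!\rangle=-x_0y_0+\sum_{i=1}^{m+1}x_iy_i$, $\mathbb{H}^{m+1}=\{x:\langle\!\langle x,x\rangle\!\rangle=-1,x_0>0\}$, and $E(s)=\{y\in\mathbb{H}^{m+1}:\langle\!\langle y,(0,e_{m+1})\rangle\!\rangle=s\}$. For $\rho\in C^1$ the associated map is $\phi^\rho(x)=\frac{e^{\rho}}{2}\big(1+e^{-2\rho}(1+|\nabla\rho|^2)\big)(1,x)+e^{-\rho}(0,-x+\nabla\rho)$, and $\phi_t:=\phi^{\rho+t}$ (parallel flow). The mean curvature of $\partial\mathbb{S}^m_+$ w.r.t. $g=e^{2\rho}g_0$ and the unit normal $e^{-\rho}e_{m+1}$ pointing into $\mathbb{S}^m_+$ is $h(g)=-e^{-\rho}\langle\nabla\rho,e_{m+1}\rangle$ (normalized mean curvature; this is the case $r=\pi/2$, $p={\bf n}$ of $h(g)=e^{-\rho}(\cot r-\partial\rho/\partial\nu)$). *)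

theory Defs
  imports "HOL-Analysis.Analysis"
begin

text \<open>Ambient space R^(m+1) is an arbitrary Euclidean space 'a with DIM('a) = m+1;
  the north pole is a unit vector n.\<close>

definition partial :: "('a::euclidean_space \<Rightarrow> real) \<Rightarrow> 'a \<Rightarrow> 'a \<Rightarrow> real" where
  "partial f b x = frechet_derivative f (at x) b"

fun Ck :: "nat \<Rightarrow> 'a::euclidean_space set \<Rightarrow> ('a \<Rightarrow> real) \<Rightarrow> bool" where
  "Ck 0 U g = continuous_on U g"
| "Ck (Suc k) U g = (continuous_on U g \<and> (\<forall>x\<in>U. g differentiable (at x)) \<and>
      (\<forall>b\<in>Basis. Ck k U (partial g b)))"

definition smooth_on :: "'a::euclidean_space set \<Rightarrow> ('a \<Rightarrow> 'b::euclidean_space) \<Rightarrow> bool" where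
  "smooth_on U f \<longleftrightarrow> (\<forall>b\<in>Basis. \<forall>k. Ck k U (\<lambda>x. f x \<bullet> b))"

definition locally_holder :: "real \<Rightarrow> 'a::euclidean_space set \<Rightarrow> ('a \<Rightarrow> real) \<Rightarrow> bool" where
  "locally_holder \<alpha> U g \<longleftrightarrow> (\<forall>K. compact K \<and> K \<subseteq> U \<longrightarrow>
      (\<exists>L. \<forall>x\<in>K. \<forall>y\<in>K. \<bar>g x - g y\<bar> \<le> L * dist x y powr \<alpha>))"

definition C2alpha_on :: "real \<Rightarrow> 'a::euclidean_space set \<Rightarrow> ('a \<Rightarrow> real) \<Rightarrow> bool" where
  "C2alpha_on \<alpha> U f \<longleftrightarrow> open U \<and> Ck 2 U f \<and>
     (\<forall>b1\<in>Basis. \<forall>b2\<in>Basis. locally_holder \<alpha> U (partial (partial f b1) b2))"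

definition submanifold :: "nat \<Rightarrow> 'a::euclidean_space set \<Rightarrow> bool" where
  "submanifold k M \<longleftrightarrow> (\<forall>p\<in>M. \<exists>W W' \<psi> \<theta> V. open W \<and> p \<in> W \<and> open W' \<and>
      subspace V \<and> dim V = k \<and> homeomorphism W W' \<psi> \<theta> \<and>
      smooth_on W (\<psi> :: 'a \<Rightarrow> 'a) \<and> smooth_on W' (\<theta> :: 'a \<Rightarrow> 'a) \<and> \<psi> ` (M \<inter> W) = W' \<inter> V)"

text \<open>Gradient on the unit sphere w.r.t. the round metric: tangential projection of the
  ambient gradient.\<close>
definition sgrad :: "('a::euclidean_space \<Rightarrow> real) \<Rightarrow> 'a \<Rightarrow> 'a" where
  "sgrad \<rho> x = (let D = (\<Sum>b\<in>Basis. partial \<rho> b x *\<^sub>R b) in D - (D \<bullet> x) *\<^sub>R x)"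

definition lorentz :: "real \<times> 'a::euclidean_space \<Rightarrow> real \<times> 'a \<Rightarrow> real" where
  "lorentz y z = - fst y * fst z + snd y \<bullet> snd z"

definition hyperbolic :: "(real \<times> 'a::euclidean_space) set" where
  "hyperbolic = {y. lorentz y y = -1 \<and> fst y > 0}"

text \<open>phi_t = phi^(rho + t); note grad(rho+t) = grad rho.\<close>
definition phi :: "('a::euclidean_space \<Rightarrow> real) \<Rightarrow> real \<Rightarrow> 'a \<Rightarrow> real \<times> 'a" where
  "phi \<rho> t x = (let r = \<rho> x + t; G = sgrad \<rho> x;
       a = exp r / 2 * (1 + exp (-2 * r) * (1 + (norm G)\<^sup>2))
     in (a, a *\<^sub>R x + exp (- r) *\<^sub>R (G - x)))"

text \<open>Normalized mean curvature of the equator w.r.t. e^(2 rho) g0, normal into the upper hemisphere.\<close>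
definition hmean :: "'a::euclidean_space \<Rightarrow> ('a \<Rightarrow> real) \<Rightarrow> 'a \<Rightarrow> real" where
  "hmean n \<rho> x = - exp (- \<rho> x) * (sgrad \<rho> x \<bullet> n)"

end

theory Submission
  imports Defs
begin

lemma fd_bound:
  fixes g :: "'a::euclidean_space \<Rightarrow> real"
  assumes "g differentiable (at x)" "\<And>b. b\<in>Basis \<Longrightarrow> \<bar>partial g b x\<bar> \<le> M b"
  shows "\<bar>frechet_derivative g (at x) h\<bar> \<le> (\<Sum>b\<in>Basis. M b) * norm h"
proof -
  let ?D = "frechet_derivative g (at x)"
  have lin: "linear ?D" using assms(1) by (rule linear_frechet_derivative)
  have "?D h = ?D (\<Sum>b\<in>Basis. (h \<bullet> b) *\<^sub>R b)" by (simp add: euclidean_representation)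
  also have "\<dots> = (\<Sum>b\<in>Basis. (h \<bullet> b) * ?D b)"
    using lin by (simp add: linear_sum linear_scale)
  finally have "\<bar>?D h\<bar> \<le> (\<Sum>b\<in>Basis. \<bar>h \<bullet> b\<bar> * \<bar>?D b\<bar>)"
    by (metis (no_types, lifting) abs_mult sum.cong sum_abs)
  also have "\<dots> \<le> (\<Sum>b\<in>Basis. norm h * M b)"
  proof (rule sum_mono)
    fix b :: 'a assume b: "b \<in> Basis"
    have "\<bar>?D b\<bar> \<le> M b" using assms(2)[OF b] by (simp add: partial_def)
    moreover have "\<bar>h \<bullet> b\<bar> \<le> norm h" using b by (rule Basis_le_norm)
    ultimately show "\<bar>h \<bullet> b\<bar> * \<bar>?D b\<bar> \<le> norm h * M b"
      by (meson abs_ge_zero mult_mono' order.trans)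
  qed
  finally show ?thesis by (simp add: sum_distrib_left mult.commute)
qed

lemma lip_from_partials:
  fixes g :: "'a::euclidean_space \<Rightarrow> real"
  assumes dif: "\<forall>x\<in>U. g differentiable (at x)" and cont: "\<forall>b\<in>Basis. continuous_on U (partial g b)"
    and K: "compact K" "K \<subseteq> U"
  shows "\<exists>L\<ge>0. \<forall>S. convex S \<longrightarrow> S \<subseteq> K \<longrightarrow> (\<forall>x\<in>S. \<forall>y\<in>S. \<bar>g x - g y\<bar> \<le> L * norm (x - y))"
proof -
  have "\<forall>b\<in>Basis. \<exists>M. M \<ge> 0 \<and> (\<forall>x\<in>K. \<bar>partial g b x\<bar> \<le> M)"
  proof
    fix b :: 'a assume "b \<in> Basis"
    then have "continuous_on K (partial g b)" using cont K continuous_on_subset by blast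
    then obtain B where "B \<ge> 0" "\<And>x. x \<in> K \<Longrightarrow> norm (partial g b x) \<le> B"
      using continuous_on_compact_bound K(1) by blast
    then show "\<exists>M. M \<ge> 0 \<and> (\<forall>x\<in>K. \<bar>partial g b x\<bar> \<le> M)" by auto
  qed
  then obtain M where M: "\<forall>b\<in>Basis. M b \<ge> 0 \<and> (\<forall>x\<in>K. \<bar>partial g b x\<bar> \<le> M b)"
    by metis
  define L where "L = (\<Sum>b\<in>Basis. M b)"
  have L0: "L \<ge> 0" unfolding L_def using M by (simp add: sum_nonneg)
  show ?thesis
  proof (intro exI[of _ L] conjI allI impI ballI L0)
    fix S x y assume S: "convex S" "S \<subseteq> K" and xy: "x \<in> S" "y \<in> S"
    have "norm (g x - g y) \<le> L * norm (x - y)"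
    proof (rule differentiable_bound[OF S(1) _ _ xy])
      fix z assume z: "z \<in> S"
      then have gd: "g differentiable (at z)" using dif S K by auto
      show "(g has_derivative frechet_derivative g (at z)) (at z within S)"
        using gd frechet_derivative_works has_derivative_at_withinI by blast
      show "onorm (frechet_derivative g (at z)) \<le> L"
      proof (rule onorm_le)
        fix h
        have "\<bar>frechet_derivative g (at z) h\<bar> \<le> (\<Sum>b\<in>Basis. M b) * norm h"
          by (rule fd_bound[OF gd]) (use M z S in auto)
        then show "norm (frechet_derivative g (at z) h) \<le> L * norm h" by (simp add: L_def)
      qed
    qed
    then show "\<bar>g x - g y\<bar> \<le> L * norm (x - y)" by simp
  qed
qed

lemma lip_mult:
  fixes u v :: "'a::real_normed_vector \<Rightarrow> real"
  assumes "\<forall>x\<in>S. \<forall>y\<in>S. \<bar>u x - u y\<bar> \<le> Lu * norm (x - y)"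
    "\<forall>x\<in>S. \<forall>y\<in>S. \<bar>v x - v y\<bar> \<le> Lv * norm (x - y)"
    "\<forall>x\<in>S. \<bar>u x\<bar> \<le> Mu" "\<forall>x\<in>S. \<bar>v x\<bar> \<le> Mv"
  shows "\<forall>x\<in>S. \<forall>y\<in>S. \<bar>u x * v x - u y * v y\<bar> \<le> (Mu * Lv + Mv * Lu) * norm (x - y)"
proof (intro ballI)
  fix x y assume xy: "x \<in> S" "y \<in> S"
  have "u x * v x - u y * v y = u x * (v x - v y) + v y * (u x - u y)" by (simp add: algebra_simps)
  then have "\<bar>u x * v x - u y * v y\<bar> \<le> \<bar>u x\<bar> * \<bar>v x - v y\<bar> + \<bar>v y\<bar> * \<bar>u x - u y\<bar>"
    by (metis abs_mult abs_triangle_ineq)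
  also have "\<dots> \<le> Mu * (Lv * norm (x - y)) + Mv * (Lu * norm (x - y))"
    by (intro add_mono mult_mono) (use assms xy in auto)
  finally show "\<bar>u x * v x - u y * v y\<bar> \<le> (Mu * Lv + Mv * Lu) * norm (x - y)"
    by (simp add: algebra_simps)
qed

lemma bound_mult:
  fixes u v :: "'a \<Rightarrow> real"
  assumes "\<forall>x\<in>S. \<bar>u x\<bar> \<le> Mu" "\<forall>x\<in>S. \<bar>v x\<bar> \<le> Mv"
  shows "\<forall>x\<in>S. \<bar>u x * v x\<bar> \<le> Mu * Mv"
  using assms by (simp add: abs_mult mult_mono')

lemma lip_sum:
  fixes u :: "'i \<Rightarrow> 'a::real_normed_vector \<Rightarrow> real"
  assumes "\<forall>i\<in>I. \<forall>x\<in>S. \<forall>y\<in>S. \<bar>u i x - u i y\<bar> \<le> L i * norm (x - y)"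
  shows "\<forall>x\<in>S. \<forall>y\<in>S. \<bar>(\<Sum>i\<in>I. u i x) - (\<Sum>i\<in>I. u i y)\<bar> \<le> (\<Sum>i\<in>I. L i) * norm (x - y)"
proof (intro ballI)
  fix x y assume xy: "x \<in> S" "y \<in> S"
  have "\<bar>(\<Sum>i\<in>I. u i x) - (\<Sum>i\<in>I. u i y)\<bar> = \<bar>\<Sum>i\<in>I. u i x - u i y\<bar>"
    by (simp add: sum_subtractf)
  also have "\<dots> \<le> (\<Sum>i\<in>I. \<bar>u i x - u i y\<bar>)" by (rule sum_abs)
  also have "\<dots> \<le> (\<Sum>i\<in>I. L i * norm (x - y))" by (rule sum_mono) (use assms xy in auto)
  finally show "\<bar>(\<Sum>i\<in>I. u i x) - (\<Sum>i\<in>I. u i y)\<bar> \<le> (\<Sum>i\<in>I. L i) * norm (x - y)"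
    by (simp add: sum_distrib_right)
qed

lemma bound_sum:
  fixes u :: "'i \<Rightarrow> 'a \<Rightarrow> real"
  assumes "\<forall>i\<in>I. \<forall>x\<in>S. \<bar>u i x\<bar> \<le> M i"
  shows "\<forall>x\<in>S. \<bar>\<Sum>i\<in>I. u i x\<bar> \<le> (\<Sum>i\<in>I. M i)"
proof
  fix x assume "x \<in> S"
  have "\<bar>\<Sum>i\<in>I. u i x\<bar> \<le> (\<Sum>i\<in>I. \<bar>u i x\<bar>)" by (rule sum_abs)
  also have "\<dots> \<le> (\<Sum>i\<in>I. M i)" by (rule sum_mono) (use assms \<open>x \<in> S\<close> in auto)
  finally show "\<bar>\<Sum>i\<in>I. u i x\<bar> \<le> (\<Sum>i\<in>I. M i)" .
qed

lemma exp_lip: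
  fixes a b :: real
  assumes "\<bar>a\<bar> \<le> M" "\<bar>b\<bar> \<le> M"
  shows "\<bar>exp a - exp b\<bar> \<le> exp M * \<bar>a - b\<bar>"
proof -
  have key: "exp q - exp p \<le> exp M * (q - p)" if "p \<le> q" "\<bar>q\<bar> \<le> M" for p q :: real
  proof -
    have "1 + (p - q) \<le> exp (p - q)" by (rule exp_ge_add_one_self)
    then have "exp q * (1 + (p - q)) \<le> exp q * exp (p - q)" by simp
    then have "exp q - exp p \<le> exp q * (q - p)" by (simp add: exp_diff algebra_simps)
    also have "\<dots> \<le> exp M * (q - p)" using that by (intro mult_right_mono) auto
    finally show ?thesis .
  qed
  show ?thesis
  proof (cases "a \<le> b")
    case True
    then show ?thesis using key[of a b] assms by simp
  next
    case False
    then show ?thesis using key[of b a] assms by simp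
  qed
qed

lemma sgrad_inner:
  "sgrad \<rho> x \<bullet> n = (\<Sum>b\<in>Basis. partial \<rho> b x * (b \<bullet> n)) - (\<Sum>b\<in>Basis. partial \<rho> b x * (b \<bullet> x)) * (x \<bullet> n)"
  unfolding sgrad_def Let_def by (simp add: inner_diff_left inner_sum_left)

lemma Ck2_unfold:
  "Ck 2 U g \<longleftrightarrow> continuous_on U g \<and> (\<forall>x\<in>U. g differentiable (at x)) \<and>
     (\<forall>b\<in>Basis. continuous_on U (partial g b) \<and> (\<forall>x\<in>U. partial g b differentiable (at x)) \<and>
        (\<forall>b'\<in>Basis. continuous_on U (partial (partial g b) b')))"
  by (simp add: numeral_2_eq_2)

lemma lip_f:
  fixes \<rho> :: "'a::euclidean_space \<Rightarrow> real" and n :: 'a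
  assumes n: "norm n = 1" and C: "Ck 2 U \<rho>" and K: "compact K" "K \<subseteq> U" and R: "\<forall>x\<in>K. norm x \<le> R"
  shows "\<exists>L. \<forall>S. convex S \<longrightarrow> S \<subseteq> K \<longrightarrow>
     (\<forall>x\<in>S. \<forall>y\<in>S. \<bar>exp (- \<rho> x) * (sgrad \<rho> x \<bullet> n) - exp (- \<rho> y) * (sgrad \<rho> y \<bullet> n)\<bar> \<le> L * norm (x - y))"
proof -
  have R0: "\<forall>x\<in>K. \<forall>b\<in>Basis. \<bar>b \<bullet> x\<bar> \<le> R" using R
    by (metis Basis_le_norm inner_commute order.trans)
  have Rn: "\<forall>x\<in>K. \<bar>x \<bullet> n\<bar> \<le> R" using R n
    by (metis Cauchy_Schwarz_ineq2 mult.right_neutral order.trans)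
  from C[unfolded Ck2_unfold] have
    c\<rho>: "continuous_on U \<rho>" and d\<rho>: "\<forall>x\<in>U. \<rho> differentiable (at x)" and
    pb: "\<forall>b\<in>Basis. continuous_on U (partial \<rho> b) \<and> (\<forall>x\<in>U. partial \<rho> b differentiable (at x)) \<and>
        (\<forall>b'\<in>Basis. continuous_on U (partial (partial \<rho> b) b'))" by auto
  obtain L\<rho> where L\<rho>: "\<forall>S. convex S \<longrightarrow> S \<subseteq> K \<longrightarrow> (\<forall>x\<in>S. \<forall>y\<in>S. \<bar>\<rho> x - \<rho> y\<bar> \<le> L\<rho> * norm (x - y))"
    using lip_from_partials[OF d\<rho> _ K] pb by blast
  have "\<forall>b\<in>Basis. \<exists>L. \<forall>S. convex S \<longrightarrow> S \<subseteq> K \<longrightarrow> (\<forall>x\<in>S. \<forall>y\<in>S. \<bar>partial \<rho> b x - partial \<rho> b y\<bar> \<le> L * norm (x - y))"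
  proof
    fix b :: 'a assume "b \<in> Basis"
    then show "\<exists>L. \<forall>S. convex S \<longrightarrow> S \<subseteq> K \<longrightarrow> (\<forall>x\<in>S. \<forall>y\<in>S. \<bar>partial \<rho> b x - partial \<rho> b y\<bar> \<le> L * norm (x - y))"
      using lip_from_partials[of U "partial \<rho> b" K] pb K by blast
  qed
  then obtain Lb where Lb: "\<forall>b\<in>Basis. \<forall>S. convex S \<longrightarrow> S \<subseteq> K \<longrightarrow> (\<forall>x\<in>S. \<forall>y\<in>S. \<bar>partial \<rho> b x - partial \<rho> b y\<bar> \<le> Lb b * norm (x - y))"
    by metis
  obtain M\<rho> where M\<rho>: "\<forall>x\<in>K. \<bar>\<rho> x\<bar> \<le> M\<rho>"
    using continuous_on_compact_bound[OF K(1) continuous_on_subset[OF c\<rho> K(2)]] by (metis real_norm_def)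
  have "\<forall>b\<in>Basis. \<exists>M. \<forall>x\<in>K. \<bar>partial \<rho> b x\<bar> \<le> M"
  proof
    fix b :: 'a assume "b \<in> Basis"
    then have "continuous_on K (partial \<rho> b)" using pb K continuous_on_subset by blast
    then show "\<exists>M. \<forall>x\<in>K. \<bar>partial \<rho> b x\<bar> \<le> M"
      using continuous_on_compact_bound[OF K(1)] by (metis real_norm_def)
  qed
  then obtain Mb where Mb: "\<forall>b\<in>Basis. \<forall>x\<in>K. \<bar>partial \<rho> b x\<bar> \<le> Mb b" by metis
  define L1 where "L1 = (\<Sum>b\<in>Basis. Mb b * 0 + \<bar>b \<bullet> n\<bar> * Lb b)"
  define L2 where "L2 = (\<Sum>b\<in>Basis. Mb b * 1 + R * Lb b)"
  define M2 where "M2 = (\<Sum>b\<in>Basis. Mb b * R)"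
  define L3 where "L3 = M2 * 1 + R * L2"
  define Mg where "Mg = (\<Sum>b\<in>Basis. Mb b * \<bar>b \<bullet> n\<bar>) + M2 * R"
  define Le where "Le = exp M\<rho> * L\<rho>"
  define L where "L = exp M\<rho> * (L1 + L3) + Mg * Le"
  show ?thesis
  proof (intro exI[of _ L] allI impI)
    fix S assume S: "convex S" "S \<subseteq> K"
    have lb: "\<forall>b\<in>Basis. \<forall>x\<in>S. \<forall>y\<in>S. \<bar>partial \<rho> b x - partial \<rho> b y\<bar> \<le> Lb b * norm (x - y)"
      using Lb S by blast
    have mb: "\<forall>b\<in>Basis. \<forall>x\<in>S. \<bar>partial \<rho> b x\<bar> \<le> Mb b" using Mb S by blast
    have t1: "\<forall>b\<in>Basis. \<forall>x\<in>S. \<forall>y\<in>S. \<bar>partial \<rho> b x * (b \<bullet> n) - partial \<rho> b y * (b \<bullet> n)\<bar> \<le> (Mb b * 0 + \<bar>b \<bullet> n\<bar> * Lb b) * norm (x - y)"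
    proof
      fix b :: 'a assume b: "b \<in> Basis"
      show "\<forall>x\<in>S. \<forall>y\<in>S. \<bar>partial \<rho> b x * (b \<bullet> n) - partial \<rho> b y * (b \<bullet> n)\<bar> \<le> (Mb b * 0 + \<bar>b \<bullet> n\<bar> * Lb b) * norm (x - y)"
        by (rule lip_mult[where u="partial \<rho> b" and v="\<lambda>_. b \<bullet> n"]) (use lb mb b in auto)
    qed
    have T1: "\<forall>x\<in>S. \<forall>y\<in>S. \<bar>(\<Sum>b\<in>Basis. partial \<rho> b x * (b \<bullet> n)) - (\<Sum>b\<in>Basis. partial \<rho> b y * (b \<bullet> n))\<bar> \<le> L1 * norm (x - y)"
      unfolding L1_def by (rule lip_sum) (use t1 in blast)
    have BT1: "\<forall>x\<in>S. \<bar>\<Sum>b\<in>Basis. partial \<rho> b x * (b \<bullet> n)\<bar> \<le> (\<Sum>b\<in>Basis. Mb b * \<bar>b \<bullet> n\<bar>)"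
      by (rule bound_sum) (use mb in \<open>auto simp: abs_mult intro: mult_right_mono\<close>)
    have t2: "\<forall>b\<in>Basis. \<forall>x\<in>S. \<forall>y\<in>S. \<bar>partial \<rho> b x * (b \<bullet> x) - partial \<rho> b y * (b \<bullet> y)\<bar> \<le> (Mb b * 1 + R * Lb b) * norm (x - y)"
    proof
      fix b :: 'a assume b: "b \<in> Basis"
      have 1: "\<forall>x\<in>S. \<forall>y\<in>S. \<bar>b \<bullet> x - b \<bullet> y\<bar> \<le> 1 * norm (x - y)"
        using b by (metis Basis_le_norm inner_commute inner_diff_right mult_1)
      show "\<forall>x\<in>S. \<forall>y\<in>S. \<bar>partial \<rho> b x * (b \<bullet> x) - partial \<rho> b y * (b \<bullet> y)\<bar> \<le> (Mb b * 1 + R * Lb b) * norm (x - y)"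
        by (rule lip_mult[where u="partial \<rho> b" and v="\<lambda>x. b \<bullet> x"]) (use lb mb b 1 R0 S in auto)
    qed
    have T2: "\<forall>x\<in>S. \<forall>y\<in>S. \<bar>(\<Sum>b\<in>Basis. partial \<rho> b x * (b \<bullet> x)) - (\<Sum>b\<in>Basis. partial \<rho> b y * (b \<bullet> y))\<bar> \<le> L2 * norm (x - y)"
      unfolding L2_def by (rule lip_sum) (use t2 in blast)
    have BT2: "\<forall>x\<in>S. \<bar>\<Sum>b\<in>Basis. partial \<rho> b x * (b \<bullet> x)\<bar> \<le> M2"
      unfolding M2_def
    proof (rule bound_sum, intro ballI)
      fix b :: 'a and x assume bx: "b \<in> Basis" "x \<in> S"
      have "\<bar>partial \<rho> b x\<bar> \<le> Mb b" "\<bar>b \<bullet> x\<bar> \<le> R" using mb R0 S bx by auto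
      then show "\<bar>partial \<rho> b x * (b \<bullet> x)\<bar> \<le> Mb b * R"
        by (simp add: abs_mult mult_mono')
    qed
    have nn: "\<forall>x\<in>S. \<forall>y\<in>S. \<bar>x \<bullet> n - y \<bullet> n\<bar> \<le> 1 * norm (x - y)"
      using n by (metis Cauchy_Schwarz_ineq2 inner_diff_left mult.commute)
    have T3: "\<forall>x\<in>S. \<forall>y\<in>S. \<bar>(\<Sum>b\<in>Basis. partial \<rho> b x * (b \<bullet> x)) * (x \<bullet> n) - (\<Sum>b\<in>Basis. partial \<rho> b y * (b \<bullet> y)) * (y \<bullet> n)\<bar> \<le> L3 * norm (x - y)"
      unfolding L3_def
      by (rule lip_mult[where u="\<lambda>x. \<Sum>b\<in>Basis. partial \<rho> b x * (b \<bullet> x)" and v="\<lambda>x. x \<bullet> n"])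
        (use T2 BT2 nn Rn S in auto)
    have BT3: "\<forall>x\<in>S. \<bar>(\<Sum>b\<in>Basis. partial \<rho> b x * (b \<bullet> x)) * (x \<bullet> n)\<bar> \<le> M2 * R"
      by (rule bound_mult[where u="\<lambda>x. \<Sum>b\<in>Basis. partial \<rho> b x * (b \<bullet> x)" and v="\<lambda>x. x \<bullet> n"])
        (use BT2 Rn S in auto)
    have G: "\<forall>x\<in>S. \<forall>y\<in>S. \<bar>sgrad \<rho> x \<bullet> n - sgrad \<rho> y \<bullet> n\<bar> \<le> (L1 + L3) * norm (x - y)"
    proof (intro ballI)
      fix x y assume xy: "x \<in> S" "y \<in> S"
      show "\<bar>sgrad \<rho> x \<bullet> n - sgrad \<rho> y \<bullet> n\<bar> \<le> (L1 + L3) * norm (x - y)"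
        unfolding sgrad_inner using T1[rule_format, OF xy] T3[rule_format, OF xy]
        by (simp add: algebra_simps)
    qed
    have BG: "\<forall>x\<in>S. \<bar>sgrad \<rho> x \<bullet> n\<bar> \<le> Mg"
      unfolding sgrad_inner Mg_def using BT1 BT3 by (smt (verit, best))
    have E: "\<forall>x\<in>S. \<forall>y\<in>S. \<bar>exp (- \<rho> x) - exp (- \<rho> y)\<bar> \<le> Le * norm (x - y)"
    proof (intro ballI)
      fix x y assume xy: "x \<in> S" "y \<in> S"
      have "\<bar>exp (- \<rho> x) - exp (- \<rho> y)\<bar> \<le> exp M\<rho> * \<bar>- \<rho> x - - \<rho> y\<bar>"
        by (rule exp_lip) (use M\<rho> xy S in auto)
      also have "\<dots> \<le> exp M\<rho> * (L\<rho> * norm (x - y))"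
        using L\<rho> S xy by (intro mult_left_mono) (auto simp: abs_minus_commute)
      finally show "\<bar>exp (- \<rho> x) - exp (- \<rho> y)\<bar> \<le> Le * norm (x - y)" by (simp add: Le_def)
    qed
    have BE: "\<forall>x\<in>S. \<bar>exp (- \<rho> x)\<bar> \<le> exp M\<rho>" using M\<rho> S by (auto simp: abs_le_iff)
    show "\<forall>x\<in>S. \<forall>y\<in>S. \<bar>exp (- \<rho> x) * (sgrad \<rho> x \<bullet> n) - exp (- \<rho> y) * (sgrad \<rho> y \<bullet> n)\<bar> \<le> L * norm (x - y)"
      unfolding L_def
      by (rule lip_mult[where u="\<lambda>x. exp (- \<rho> x)" and v="\<lambda>x. sgrad \<rho> x \<bullet> n"]) (use E G BE BG in auto)
  qed
qed

lemma sgrad_perp: "norm x = 1 \<Longrightarrow> sgrad \<rho> x \<bullet> x = 0"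
  unfolding sgrad_def Let_def by (simp add: inner_diff_left dot_square_norm)

lemma phi_hyp:
  assumes "norm x = 1"
  shows "phi \<rho> t x \<in> hyperbolic"
proof -
  define r where "r = \<rho> x + t"
  define G where "G = sgrad \<rho> x"
  define a where "a = exp r / 2 * (1 + exp (-2 * r) * (1 + (norm G)\<^sup>2))"
  have gg: "G \<bullet> G = norm G * norm G" by (simp add: power2_eq_square[symmetric] dot_square_norm)
  have Gx: "G \<bullet> x = 0" using sgrad_perp[OF assms] G_def by simp
  have xx: "x \<bullet> x = 1" using assms by (simp add: dot_square_norm)
  have ph: "phi \<rho> t x = (a, a *\<^sub>R x + exp (- r) *\<^sub>R (G - x))"
    unfolding phi_def Let_def r_def G_def a_def by simp
  have a0: "a > 0" unfolding a_def by (intro mult_pos_pos add_pos_nonneg) auto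
  have e2: "exp (-2 * r) = exp (- r) * exp (- r)" by (simp flip: exp_add)
  have er: "exp r * exp (- r) = 1" by (simp flip: exp_add)
  have "(a *\<^sub>R x + exp (- r) *\<^sub>R (G - x)) \<bullet> (a *\<^sub>R x + exp (- r) *\<^sub>R (G - x))
      = (a - exp (- r))\<^sup>2 + exp (- r) ^ 2 * (norm G)\<^sup>2"
    by (simp add: algebra_simps inner_commute Gx xx power2_eq_square gg)
  moreover have "- a * a + ((a - exp (- r))\<^sup>2 + exp (- r) ^ 2 * (norm G)\<^sup>2) = -1"
  proof -
    have "2 * a * exp (- r) = 1 + exp (- r) * exp (-r) * (1 + (norm G)\<^sup>2)"
      unfolding a_def e2 using er by (simp add: algebra_simps)
    then show ?thesis by (simp add: power2_eq_square algebra_simps)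
  qed
  ultimately show ?thesis using a0 unfolding hyperbolic_def lorentz_def ph by simp
qed

lemma alg:
  fixes E1 E2 xn gn u :: real
  assumes "E1 > 0" "E2 > 0"
  shows "E2 * (E1 * E2 / 2 * (1 + (1 / (E1 * E2) * (1 / (E1 * E2))) * (1 + u\<^sup>2)) * xn + 1 / (E1 * E2) * (gn - xn))
     = xn * (E2 ^ 2 * E1 / 2 + 1 / E1 * (u\<^sup>2 - 1) / 2) + 1 / E1 * gn"
  using assms by (simp add: field_simps power2_eq_square)

lemma phi_lorentz:
  fixes n :: "'a::euclidean_space"
  shows "exp t * lorentz (phi \<rho> t x) (0, n) =
    (x \<bullet> n) * (exp (2 * t) * exp (\<rho> x) / 2 + exp (- \<rho> x) * ((norm (sgrad \<rho> x))\<^sup>2 - 1) / 2)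
     + exp (- \<rho> x) * (sgrad \<rho> x \<bullet> n)"
proof -
  define E1 where "E1 = exp (\<rho> x)"
  define E2 where "E2 = exp t"
  have e1: "exp (\<rho> x + t) = E1 * E2" unfolding E1_def E2_def by (simp add: exp_add)
  have e3: "exp (- (\<rho> x + t)) = 1 / (E1 * E2)" unfolding E1_def E2_def
    by (simp only: exp_minus exp_add inverse_eq_divide)
  have e2: "exp (-2 * (\<rho> x + t)) = 1 / (E1 * E2) * (1 / (E1 * E2))"
  proof -
    have "exp (-2 * (\<rho> x + t)) = exp (- (\<rho> x + t)) * exp (- (\<rho> x + t))" by (simp flip: exp_add)
    then show ?thesis unfolding e3 .
  qed
  have e4: "exp (2 * t) = E2 ^ 2" unfolding E2_def by (simp add: power2_eq_square flip: exp_add)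
  have e5: "exp (- \<rho> x) = 1 / E1" unfolding E1_def by (simp only: exp_minus inverse_eq_divide)
  have L: "lorentz (phi \<rho> t x) (0, n) =
      E1 * E2 / 2 * (1 + (1 / (E1 * E2) * (1 / (E1 * E2))) * (1 + (norm (sgrad \<rho> x))\<^sup>2)) * (x \<bullet> n)
      + 1 / (E1 * E2) * (sgrad \<rho> x \<bullet> n - x \<bullet> n)"
    unfolding phi_def Let_def lorentz_def e1 e2 e3 by (simp add: inner_add_left inner_diff_left)
  show ?thesis unfolding L e4 e5 E2_def[symmetric] E1_def[symmetric]
    by (rule alg) (auto simp: E1_def E2_def)
qed

lemma lin1: fixes a1 a2 a3 B b5 W c Q :: real
  shows "a2 \<ge> - B / 2 \<Longrightarrow> a3 \<ge> - b5 \<Longrightarrow> a1 \<ge> W + \<bar>c\<bar> \<Longrightarrow> B / 2 + b5 \<le> W \<Longrightarrow> Q = a1 + a2 + a3 + c \<Longrightarrow> Q \<ge> 0"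
  by linarith

lemma lin2: fixes Y B a1 c Q :: real
  shows "Y \<ge> B \<Longrightarrow> a1 + B \<ge> \<bar>c\<bar> \<Longrightarrow> Q = a1 + Y + c \<Longrightarrow> Q \<ge> 0"
  by linarith

lemma lin3: fixes Z T F Q :: real
  shows "Z \<ge> T \<Longrightarrow> Q = Z + F \<Longrightarrow> F \<ge> - T \<Longrightarrow> Q \<ge> 0"
  by linarith

lemma lin4: fixes W P X :: real
  shows "2 * W \<le> P \<Longrightarrow> P / 2 \<le> X \<Longrightarrow> W \<le> X"
  by linarith

theorem mainTheorem8:
  fixes n :: "'a::euclidean_space" and \<Omega> V1 V2 :: "'a set"
    and \<rho> :: "'a \<Rightarrow> real" and \<alpha> c :: real
  assumes dim: "DIM('a) \<ge> 4"
    and n: "norm n = 1"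
    and \<Omega>_open: "openin (top_of_set (sphere 0 1)) \<Omega>"
    and \<Omega>_conn: "connected \<Omega>" and \<Omega>_ne: "\<Omega> \<noteq> {}"
    and \<Omega>_sub: "\<Omega> \<subseteq> {x \<in> sphere 0 1. x \<bullet> n > 0}"
    and bdry: "closure \<Omega> - \<Omega> = V1 \<union> V2" and disj: "V1 \<inter> V2 = {}"
    and V1: "compact V1" "V1 \<subseteq> sphere 0 1" "submanifold (DIM('a) - 2) V1"
      "{x \<in> sphere 0 1. x \<bullet> n = 0} \<subseteq> V1"
    and V2: "\<exists>F. finite F \<and> pairwise disjnt F \<and> \<Union>F = V2 \<and>
      (\<forall>M\<in>F. compact M \<and> M \<subseteq> sphere 0 1 \<and> (\<exists>k. submanifold k M))"
    and \<alpha>: "0 < \<alpha>" "\<alpha> < 1"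
    and reg: "\<exists>U. \<Omega> \<union> V1 \<subseteq> U \<and> C2alpha_on \<alpha> U \<rho>"
    and h: "\<forall>x\<in>sphere 0 1. x \<bullet> n = 0 \<longrightarrow> hmean n \<rho> x = c"
    and blowup: "\<forall>q\<in>V2. filterlim (\<lambda>x. exp (2 * \<rho> x) + (norm (sgrad \<rho> x))\<^sup>2) at_top (at q within \<Omega>)"
  shows "\<exists>t0\<ge>0. \<forall>t>t0. phi \<rho> t ` (\<Omega> \<union> (V1 - {x \<in> sphere 0 1. x \<bullet> n = 0}))
           \<subseteq> {y \<in> hyperbolic. lorentz y (0, n) \<ge> - exp (- t) * c}"
proof -
  obtain U where U: "\<Omega> \<union> V1 \<subseteq> U" "C2alpha_on \<alpha> U \<rho>" using reg by blast
  have Uo: "open U" and C: "Ck 2 U \<rho>" using U(2) unfolding C2alpha_on_def by auto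
  have c\<rho>: "continuous_on U \<rho>" using C by (simp add: numeral_2_eq_2)
  define E where "E = {x \<in> sphere (0::'a) 1. x \<bullet> n = 0}"
  define S where "S = \<Omega> \<union> (V1 - E)"
  define f where "f x = exp (- \<rho> x) * (sgrad \<rho> x \<bullet> n)" for x
  define Q where "Q s x = (x \<bullet> n) * (s * exp (\<rho> x) / 2 + exp (- \<rho> x) * ((norm (sgrad \<rho> x))\<^sup>2 - 1) / 2) + f x + c" for s x
  have \<Omega>sph: "\<Omega> \<subseteq> sphere 0 1" using openin_subset[OF \<Omega>_open] by simp
  have clpos: "closure \<Omega> \<subseteq> {x. x \<bullet> n \<ge> 0}"
  proof (rule closure_minimal)
    show "\<Omega> \<subseteq> {x. x \<bullet> n \<ge> 0}" using \<Omega>_sub by auto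
    show "closed {x::'a. x \<bullet> n \<ge> 0}" by (intro closed_Collect_le continuous_intros)
  qed
  have V1cl: "V1 \<subseteq> closure \<Omega>" and V2cl: "V2 \<subseteq> closure \<Omega>" and V2\<Omega>: "V2 \<inter> \<Omega> = {}"
    using bdry by auto
  have Ssph: "S \<subseteq> sphere 0 1" using \<Omega>sph V1(2) S_def by auto
  have SU: "S \<subseteq> U" using U S_def by auto
  have Spos: "\<forall>x\<in>S. x \<bullet> n \<ge> 0" using clpos V1cl S_def closure_subset by auto
  have Scl: "S \<subseteq> closure \<Omega>" using V1cl S_def closure_subset by auto
  have xn1: "\<forall>x\<in>S. x \<bullet> n \<le> 1"
  proof
    fix x assume "x \<in> S"
    then have "norm x = 1" using Ssph by auto
    then have "\<bar>x \<bullet> n\<bar> \<le> 1" using n Cauchy_Schwarz_ineq2[of x n] by simp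
    then show "x \<bullet> n \<le> 1" by simp
  qed
  have fE: "\<forall>x\<in>E. f x = - c" using h unfolding E_def f_def hmean_def by auto
  have R1: "\<exists>\<eta> s1. 0 < \<eta> \<and> \<eta> \<le> 1/2 \<and> (\<forall>x\<in>S. x \<bullet> n < \<eta> \<longrightarrow> (\<forall>s\<ge>s1. Q s x \<ge> 0))"
  proof -
    have "E = {x. x \<bullet> n = 0} \<inter> sphere 0 1" unfolding E_def by auto
    moreover have "closed {x::'a. x \<bullet> n = 0}" by (intro closed_Collect_eq continuous_intros)
    ultimately have Ecomp: "compact E" by (simp add: closed_Int_compact)
    have EU: "E \<subseteq> U" using V1(4) U unfolding E_def by auto
    obtain e where e: "e > 0" "(\<Union>x\<in>E. cball x e) \<subseteq> U"
      using compact_subset_open_imp_cball_epsilon_subset[OF Ecomp Uo EU] by blast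
    define e' where "e' = min e 1"
    have e': "0 < e'" "e' \<le> e" "e' \<le> 1" unfolding e'_def using e by auto
    define K where "K = {p + y | p y. p \<in> E \<and> y \<in> cball (0::'a) e'}"
    have Kc: "compact K" unfolding K_def by (intro compact_sums Ecomp compact_cball)
    have KU: "K \<subseteq> U"
    proof
      fix z assume "z \<in> K"
      then obtain p y where z: "z = p + y" "p \<in> E" "y \<in> cball 0 e'" unfolding K_def by blast
      then have "z \<in> cball p e" using e' by (simp add: dist_norm)
      then show "z \<in> U" using e z by blast
    qed
    have KR: "\<forall>z\<in>K. norm z \<le> 2"
    proof
      fix z assume "z \<in> K"
      then obtain p y where z: "z = p + y" "p \<in> E" "y \<in> cball 0 e'" unfolding K_def by blast
      have "norm z \<le> norm p + norm y" unfolding z by (rule norm_triangle_ineq)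
      also have "\<dots> \<le> 1 + 1" using z e' unfolding E_def by auto
      finally show "norm z \<le> 2" by simp
    qed
    have ballK: "cball p e' \<subseteq> K" if "p \<in> E" for p
    proof
      fix z assume "z \<in> cball p e'"
      then have "z = p + (z - p)" "z - p \<in> cball 0 e'" by (auto simp: dist_norm norm_minus_commute)
      then show "z \<in> K" unfolding K_def using that by blast
    qed
    obtain L where L: "\<forall>S'. convex S' \<longrightarrow> S' \<subseteq> K \<longrightarrow> (\<forall>x\<in>S'. \<forall>y\<in>S'. \<bar>f x - f y\<bar> \<le> L * norm (x - y))"
      using lip_f[OF n C Kc KU KR] unfolding f_def by blast
    obtain M\<rho> where M\<rho>: "\<forall>x\<in>K. \<bar>\<rho> x\<bar> \<le> M\<rho>"
      using continuous_on_compact_bound[OF Kc continuous_on_subset[OF c\<rho> KU]] by (metis real_norm_def)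
    define \<eta> where "\<eta> = min (1/2) (e'/2)"
    define s1 where "s1 = exp M\<rho> * (exp M\<rho> + 4 * \<bar>L\<bar>)"
    show ?thesis
    proof (rule exI[of _ \<eta>], rule exI[of _ s1], intro conjI ballI impI allI)
      show "0 < \<eta>" "\<eta> \<le> 1/2" unfolding \<eta>_def using e' by auto
      fix x s assume x: "x \<in> S" "x \<bullet> n < \<eta>" and s: "s1 \<le> s"
      define xn where "xn = x \<bullet> n"
      have xn0: "0 \<le> xn" using Spos x xn_def by auto
      have xn1: "xn < 1/2" "2 * xn < e'" using x unfolding xn_def \<eta>_def by auto
      have nx: "norm x = 1" using x Ssph by auto
      define y where "y = x - xn *\<^sub>R n"
      have nn: "n \<bullet> n = 1" using n by (simp add: dot_square_norm)
      have xx: "x \<bullet> x = 1" using nx by (simp add: dot_square_norm)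
      have yn: "y \<bullet> n = 0" unfolding y_def xn_def using nn by (simp add: inner_diff_left)
      have ny2: "(norm y)\<^sup>2 = 1 - xn\<^sup>2"
        unfolding power2_norm_eq_inner y_def using nn xx
        by (simp add: inner_diff_left inner_diff_right inner_commute xn_def power2_eq_square algebra_simps)
      have "xn * xn \<le> xn * 1" by (rule mult_left_mono) (use xn0 xn1 in auto)
      then have "xn\<^sup>2 < 1" using xn1 by (simp add: power2_eq_square)
      then have "(norm y)\<^sup>2 > 0" using ny2 by simp
      then have "norm y \<noteq> 0" by auto
      then have ny0: "norm y > 0" by simp
      have ny1: "norm y \<le> 1" by (rule power2_le_imp_le) (use ny2 in simp_all)
      define x' where "x' = (1 / norm y) *\<^sub>R y"
      have x'E: "x' \<in> E" unfolding E_def x'_def using ny0 yn by (auto simp: norm_scaleR)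
      have dxx: "norm (x - x') \<le> 2 * xn"
      proof -
        have eqx: "x - x' = xn *\<^sub>R n + (1 - 1 / norm y) *\<^sub>R y" unfolding x'_def y_def by (simp add: algebra_simps)
        have "norm (x - x') \<le> norm (xn *\<^sub>R n) + norm ((1 - 1 / norm y) *\<^sub>R y)"
          unfolding eqx by (rule norm_triangle_ineq)
        also have "norm (xn *\<^sub>R n) = xn" using n xn0 by simp
        also have "norm ((1 - 1 / norm y) *\<^sub>R y) = 1 - norm y"
          using ny0 ny1 by (simp add: abs_if field_simps)
        also have "1 - norm y \<le> xn"
        proof -
          have "norm y * norm y \<le> norm y * 1" by (rule mult_left_mono) (use ny1 in auto)
          then have "(norm y)\<^sup>2 \<le> norm y" by (simp add: power2_eq_square)
          then have "1 - norm y \<le> xn\<^sup>2" using ny2 by simp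
          also have "xn\<^sup>2 \<le> xn" using \<open>xn * xn \<le> xn * 1\<close> by (simp add: power2_eq_square)
          finally show ?thesis .
        qed
        finally show ?thesis by simp
      qed
      have xin: "x \<in> cball x' e'" using dxx xn1 by (simp add: dist_norm norm_minus_commute)
      have x'in: "x' \<in> cball x' e'" using e' by simp
      have "\<bar>f x - f x'\<bar> \<le> L * norm (x - x')"
        using L[rule_format, OF convex_cball ballK[OF x'E]] xin x'in by blast
      also have "\<dots> \<le> \<bar>L\<bar> * norm (x - x')" by (rule mult_right_mono) auto
      also have "\<dots> \<le> \<bar>L\<bar> * (2 * xn)" using dxx by (rule mult_left_mono) auto
      finally have fx: "f x + c \<ge> - (2 * \<bar>L\<bar> * xn)" using fE x'E by auto
      have xK: "x \<in> K" using ballK[OF x'E] xin by blast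
      have \<rho>b: "\<bar>\<rho> x\<bar> \<le> M\<rho>" using M\<rho> xK by blast
      define A where "A = exp (\<rho> x)"
      define B where "B = exp (- \<rho> x)"
      have A0: "A > 0" and B0: "B > 0" unfolding A_def B_def by auto
      have Bb: "B \<le> exp M\<rho>" unfolding B_def using \<rho>b by simp
      have Ab: "exp (- M\<rho>) \<le> A" unfolding A_def using \<rho>b by simp
      have "s1 \<ge> 0" unfolding s1_def by simp
      then have s0: "s \<ge> 0" using s by linarith
      have "s1 * exp (- M\<rho>) \<le> s * A" by (rule mult_mono) (use s Ab s0 in auto)
      also have "s1 * exp (- M\<rho>) = exp M\<rho> + 4 * \<bar>L\<bar>"
        unfolding s1_def by (simp add: exp_minus field_simps)
      finally have sA: "s * A \<ge> B + 4 * \<bar>L\<bar>" using Bb by simp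
      define u where "u = norm (sgrad \<rho> x)"
      have "B * (u\<^sup>2 - 1) / 2 \<ge> - B / 2" using B0 by (simp add: algebra_simps)
      then have "s * A / 2 + B * (u\<^sup>2 - 1) / 2 \<ge> 2 * \<bar>L\<bar>" using sA by simp
      then have "xn * (s * A / 2 + B * (u\<^sup>2 - 1) / 2) \<ge> xn * (2 * \<bar>L\<bar>)"
        using xn0 by (intro mult_left_mono)
      moreover have "Q s x = xn * (s * A / 2 + B * (u\<^sup>2 - 1) / 2) + (f x + c)"
        unfolding Q_def xn_def A_def B_def u_def by simp
      moreover have "f x + c \<ge> - (xn * (2 * \<bar>L\<bar>))" using fx by (simp add: mult.commute mult.left_commute)
      ultimately show "Q s x \<ge> 0" by (rule lin3)
    qed
  qed
  have R2: "\<forall>\<eta>>0. \<eta> \<le> 1/2 \<longrightarrow> (\<exists>s2. \<forall>x\<in>S. x \<bullet> n \<ge> \<eta> \<longrightarrow> (\<forall>s\<ge>s2. Q s x \<ge> 0))"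
  proof (intro allI impI)
    fix \<eta> :: real assume \<eta>: "0 < \<eta>" "\<eta> \<le> 1/2"
    define u0 where "u0 = 4 / \<eta>"
    define Kb where "Kb = 1 + u0\<^sup>2"
    define F where "F x = exp (2 * \<rho> x) + (norm (sgrad \<rho> x))\<^sup>2" for x
    define Bad where "Bad = {x \<in> S. \<eta> \<le> x \<bullet> n \<and> F x < Kb}"
    have BadS: "Bad \<subseteq> S" unfolding Bad_def by auto
    have clB: "closure Bad \<subseteq> \<Omega> \<union> V1"
    proof
      fix p assume p: "p \<in> closure Bad"
      have "closure Bad \<subseteq> closure (closure \<Omega>)" using BadS Scl by (intro closure_mono) auto
      then have "closure Bad \<subseteq> closure \<Omega>" by simp
      then have pcl: "p \<in> closure \<Omega>" using p by blast
      show "p \<in> \<Omega> \<union> V1"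
      proof (rule ccontr)
        assume np: "p \<notin> \<Omega> \<union> V1"
        then have pV2: "p \<in> V2" using pcl bdry by blast
        have "filterlim F at_top (at p within \<Omega>)" using blowup pV2 unfolding F_def by blast
        then have "eventually (\<lambda>x. Kb \<le> F x) (at p within \<Omega>)" by (simp add: filterlim_at_top)
        then obtain d where d: "d > 0" "\<forall>x\<in>\<Omega>. x \<noteq> p \<and> dist x p < d \<longrightarrow> Kb \<le> F x"
          by (auto simp: eventually_at)
        have "open (- V1)" using compact_imp_closed[OF V1(1)] by auto
        moreover have "p \<in> - V1" using np by auto
        ultimately obtain d2 where d2: "d2 > 0" "ball p d2 \<subseteq> - V1" using open_contains_ball by blast
        have "min d d2 > 0" using d d2 by simp
        then obtain x where x: "x \<in> Bad" "dist x p < min d d2"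
          using p closure_approachable by blast
        have "x \<notin> V1" using d2 x by (auto simp: dist_commute)
        then have x\<Omega>: "x \<in> \<Omega>" using x BadS S_def by auto
        then have "x \<noteq> p" using np by auto
        then have "Kb \<le> F x" using d x x\<Omega> by auto
        then show False using x Bad_def by auto
      qed
    qed
    have "bounded Bad" by (rule bounded_subset[OF bounded_sphere[of 0 1]]) (use BadS Ssph in auto)
    then have cB: "compact (closure Bad)" by (simp add: compact_closure)
    have "closure Bad \<subseteq> U" using clB U by auto
    then obtain Mb where Mb: "Mb \<ge> 0" "\<And>x. x \<in> closure Bad \<Longrightarrow> norm (\<rho> x) \<le> Mb"
      using continuous_on_compact_bound[OF cB continuous_on_subset[OF c\<rho>]] by blast
    have low: "\<rho> x \<ge> - Mb" if x: "x \<in> S" "\<eta> \<le> x \<bullet> n" "norm (sgrad \<rho> x) < u0" for x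
    proof (cases "x \<in> Bad")
      case True
      then have "x \<in> closure Bad" using closure_subset by blast
      then have "norm (\<rho> x) \<le> Mb" by (rule Mb(2))
      then show ?thesis by simp
    next
      case False
      then have "Kb \<le> F x" using x Bad_def by auto
      moreover have "(norm (sgrad \<rho> x))\<^sup>2 < u0\<^sup>2" using x(3) by (simp add: power_strict_mono)
      ultimately have "exp (2 * \<rho> x) > 1" unfolding F_def Kb_def by linarith
      then have "2 * \<rho> x > 0" by simp
      then have "\<rho> x > 0" by simp
      then show ?thesis using Mb by simp
    qed
    define s2 where "s2 = max (2 * c\<^sup>2 / \<eta>) (2 * exp Mb * (exp Mb * (1/2 + u0) + \<bar>c\<bar>) / \<eta>)"
    show "\<exists>s2. \<forall>x\<in>S. x \<bullet> n \<ge> \<eta> \<longrightarrow> (\<forall>s\<ge>s2. Q s x \<ge> 0)"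
    proof (intro exI[of _ s2] ballI impI allI)
      fix x s assume x: "x \<in> S" "\<eta> \<le> x \<bullet> n" and s: "s2 \<le> s"
      define xn where "xn = x \<bullet> n"
      define A where "A = exp (\<rho> x)"
      define B where "B = exp (- \<rho> x)"
      define u where "u = norm (sgrad \<rho> x)"
      define gn where "gn = sgrad \<rho> x \<bullet> n"
      have A0: "A > 0" and B0: "B > 0" unfolding A_def B_def by auto
      have AB: "A * B = 1" unfolding A_def B_def by (simp flip: exp_add)
      have xnb: "\<eta> \<le> xn" "xn \<le> 1" using x xn1 xn_def by auto
      have u0': "u \<ge> 0" unfolding u_def by simp
      have gnu: "\<bar>gn\<bar> \<le> u" unfolding gn_def u_def using n Cauchy_Schwarz_ineq2[of "sgrad \<rho> x" n] by simp
      have sc: "s \<ge> 2 * c\<^sup>2 / \<eta>" "s \<ge> 2 * exp Mb * (exp Mb * (1/2 + u0) + \<bar>c\<bar>) / \<eta>" using s s2_def by auto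
      have s0: "s \<ge> 0" using sc(1) \<eta> by (smt (verit) divide_nonneg_pos zero_le_power2)
      have Qe: "Q s x = xn * (s * A / 2 + B * (u\<^sup>2 - 1) / 2) + B * gn + c"
        unfolding Q_def f_def xn_def A_def B_def u_def gn_def by simp
      show "Q s x \<ge> 0"
      proof (cases "u \<ge> u0")
        case True
        have "\<eta> * u \<ge> 4" using True \<eta> unfolding u0_def by (simp add: field_simps)
        have "u0 \<ge> 8" unfolding u0_def using \<eta> by (simp add: field_simps)
        then have u8: "u \<ge> 8" using True by linarith
        have "(8::real) * 8 \<le> u * u" by (rule mult_mono) (use u8 in auto)
        then have u2: "u\<^sup>2 - 1 \<ge> 0" by (simp add: power2_eq_square)
        have "xn * (u\<^sup>2 - 1) \<ge> \<eta> * (u\<^sup>2 - 1)" using xnb u2 by (intro mult_right_mono) auto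
        moreover have "\<eta> * (u\<^sup>2 - 1) / 2 - u \<ge> 1"
        proof -
          have "\<eta> * u\<^sup>2 = (\<eta> * u) * u" by (simp add: power2_eq_square)
          also have "\<dots> \<ge> 4 * u" using \<open>\<eta> * u \<ge> 4\<close> u0' by (simp add: mult_right_mono)
          finally show ?thesis using u8 \<eta> by (simp add: algebra_simps)
        qed
        ultimately have "xn * (u\<^sup>2 - 1) / 2 + gn \<ge> 1" using gnu by simp
        then have "B * (xn * (u\<^sup>2 - 1) / 2 + gn) \<ge> B" using B0 by simp
        moreover have "xn * (s * A / 2) + B \<ge> \<bar>c\<bar>"
        proof (cases "B \<ge> \<bar>c\<bar>")
          case True
          then show ?thesis using xnb \<eta> s0 A0 by (smt (verit) mult_nonneg_nonneg divide_nonneg_pos)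
        next
          case False
          have f1: "s * \<eta> \<ge> 2 * c\<^sup>2" using sc(1) \<eta> by (simp add: field_simps)
          have f2: "\<bar>c\<bar> * B \<le> c\<^sup>2"
          proof -
            have "\<bar>c\<bar> * B \<le> \<bar>c\<bar> * \<bar>c\<bar>" using False by (intro mult_left_mono) auto
            then show ?thesis by (simp add: power2_eq_square abs_mult_self_eq)
          qed
          have f3: "(\<eta> * (s * A / 2)) * B = (\<eta> * s / 2) * (A * B)" by (simp add: algebra_simps)
          have f4: "(\<eta> * s / 2) * (A * B) = \<eta> * s / 2" using AB by simp
          have f5: "(\<eta> * (s * A / 2)) * B = \<eta> * s / 2" using f3 f4 by simp
          have f6: "\<eta> * s = s * \<eta>" by simp
          have "(\<eta> * (s * A / 2)) * B \<ge> \<bar>c\<bar> * B" using f1 f2 f5 f6 by linarith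
          then have "\<eta> * (s * A / 2) \<ge> \<bar>c\<bar>" using B0 by simp
          moreover have "xn * (s * A / 2) \<ge> \<eta> * (s * A / 2)" using xnb s0 A0 by (simp add: mult_right_mono)
          ultimately show ?thesis using B0 by simp
        qed
        moreover have "Q s x = xn * (s * A / 2) + B * (xn * (u\<^sup>2 - 1) / 2 + gn) + c"
          unfolding Qe by (simp add: algebra_simps)
        ultimately show ?thesis by (rule lin2)
      next
        case False
        then have \<rho>l: "\<rho> x \<ge> - Mb" using low x u_def by simp
        have Bb: "B \<le> exp Mb" unfolding B_def using \<rho>l by simp
        have Ab: "A \<ge> exp (- Mb)" unfolding A_def using \<rho>l by simp
        have "xn * (B * (u\<^sup>2 - 1) / 2) \<ge> - B / 2"
        proof -
          have "xn * (B * (u\<^sup>2 - 1) / 2) = xn * B * u\<^sup>2 / 2 - xn * B / 2" by (simp add: field_simps)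
          moreover have "xn * B * u\<^sup>2 \<ge> 0" using xnb \<eta> B0 by simp
          moreover have "xn * B \<le> B" using xnb B0 by simp
          ultimately show ?thesis by simp
        qed
        moreover have "B * gn \<ge> - (B * u0)"
        proof -
          have "gn \<ge> - u0" using gnu False by simp
          then have "B * (- u0) \<le> B * gn" using B0 by (intro mult_left_mono) auto
          then show ?thesis by simp
        qed
        moreover have "xn * (s * A / 2) \<ge> exp Mb * (1/2 + u0) + \<bar>c\<bar>"
        proof -
          have "s * \<eta> \<ge> 2 * exp Mb * (exp Mb * (1/2 + u0) + \<bar>c\<bar>)" using sc(2) \<eta> by (simp add: field_simps)
          then have h1: "s * \<eta> * exp (- Mb) \<ge> 2 * (exp Mb * (1/2 + u0) + \<bar>c\<bar>)"
            by (simp add: exp_minus field_simps)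
          have h2: "xn * (s * A / 2) \<ge> \<eta> * (s * exp (- Mb) / 2)"
            using xnb s0 Ab \<eta> by (intro mult_mono) (auto intro: mult_left_mono)
          have h3: "\<eta> * (s * exp (- Mb) / 2) = s * \<eta> * exp (- Mb) / 2" by simp
          have h4: "s * \<eta> * exp (- Mb) / 2 \<le> xn * (s * A / 2)" using h2 unfolding h3 .
          show ?thesis by (rule lin4[OF h1 h4])
        qed
        moreover have "B / 2 + B * u0 \<le> exp Mb * (1/2 + u0)"
        proof -
          have "B * (1/2 + u0) \<le> exp Mb * (1/2 + u0)"
            using Bb \<eta> unfolding u0_def by (intro mult_right_mono) auto
          then show ?thesis by (simp add: algebra_simps)
        qed
        moreover have "Q s x = xn * (s * A / 2) + xn * (B * (u\<^sup>2 - 1) / 2) + B * gn + c"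
          unfolding Qe by (simp add: algebra_simps)
        ultimately show ?thesis by (rule lin1)
      qed
    qed
  qed
  obtain \<eta> s1 where \<eta>: "0 < \<eta>" "\<eta> \<le> 1/2" and s1: "\<forall>x\<in>S. x \<bullet> n < \<eta> \<longrightarrow> (\<forall>s\<ge>s1. Q s x \<ge> 0)"
    using R1 by blast
  obtain s2 where s2: "\<forall>x\<in>S. x \<bullet> n \<ge> \<eta> \<longrightarrow> (\<forall>s\<ge>s2. Q s x \<ge> 0)" using R2 \<eta> by blast
  define s0 where "s0 = max 1 (max s1 s2)"
  have Q0: "\<forall>x\<in>S. \<forall>s\<ge>s0. Q s x \<ge> 0"
  proof (intro ballI allI impI)
    fix x s assume x: "x \<in> S" and s: "s0 \<le> s"
    have "s1 \<le> s" "s2 \<le> s" using s unfolding s0_def by auto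
    then show "Q s x \<ge> 0"
    proof (cases "x \<bullet> n < \<eta>")
      case True
      then show ?thesis using s1 x \<open>s1 \<le> s\<close> by blast
    next
      case False
      then show ?thesis using s2 x \<open>s2 \<le> s\<close> by simp
    qed
  qed
  show ?thesis
  proof (intro exI[of _ "ln s0 / 2"] conjI allI impI)
    show "0 \<le> ln s0 / 2" unfolding s0_def by simp
    fix t assume t: "ln s0 / 2 < t"
    have "s0 < exp (2 * t)"
    proof -
      have "s0 = exp (ln s0)" unfolding s0_def by simp
      also have "\<dots> < exp (2 * t)" using t by simp
      finally show ?thesis .
    qed
    show "phi \<rho> t ` (\<Omega> \<union> (V1 - {x \<in> sphere 0 1. x \<bullet> n = 0})) \<subseteq> {y \<in> hyperbolic. lorentz y (0, n) \<ge> - exp (- t) * c}"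
    proof
      fix y assume "y \<in> phi \<rho> t ` (\<Omega> \<union> (V1 - {x \<in> sphere 0 1. x \<bullet> n = 0}))"
      then obtain x where x: "x \<in> S" and y: "y = phi \<rho> t x" unfolding S_def E_def by blast
      have "norm x = 1" using x Ssph by auto
      then have hy: "y \<in> hyperbolic" using phi_hyp y by blast
      have "Q (exp (2 * t)) x \<ge> 0" using Q0 x \<open>s0 < exp (2 * t)\<close> by auto
      then have "exp t * lorentz y (0, n) \<ge> - c"
        unfolding y phi_lorentz Q_def f_def by simp
      then have "lorentz y (0, n) \<ge> - c / exp t" by (simp add: field_simps)
      then have "lorentz y (0, n) \<ge> - exp (- t) * c" by (simp add: exp_minus field_simps)
      then show "y \<in> {y \<in> hyperbolic. lorentz y (0, n) \<ge> - exp (- t) * c}" using hy by simp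
    qed
  qed
qed

end
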